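(* Let $n\ge1$, $\mathcal{X}$ the simplex in $\mathbb{R}^{n+1}$, $\theta$ a kernel, $\Phi$ a Lipschitz continuous smooth function on an open neighborhood of $\mathcal{X}$, and $\eta>0$. Let $x(t)$ be an interior solution of the inertial dynamics (ID) defined for all $t\ge0$. Then the rate of change $\dot K(t)$ of the kinetic energy $K(t)=\frac12\|\dot x(t)\|^2$ is bounded from above for all $t\ge0$.
   Context: $\mathcal{X}=\{x\in\mathbb{R}^{n+1}:x_\alpha\ge0,\sum_\alpha x_\alpha=1\}$ with relative interior $\mathcal{X}^\circ$. A kernel is a $C^\infty$ function $\theta:[0,\infty)\to\mathbb{R}\cup\{+\infty\}$ with $\theta(x)<\infty$ for $x>0$, $\lim_{x\to0^+}\theta'(x)=-\infty$, $\theta''>0$, $\theta'''<0$ on $(0,\infty)$. The norm is $\|\dot x\|^2=\sum_\alpha\theta''(x_\alpha)\dot x_\alpha^2$. With $\theta''_\alpha=\theta''(x_\alpha)$, $\theta'''_\alpha=\theta'''(x_\alpha)$, $\Theta''=(\sum_\beta1/\theta''_\beta)^{-1}$, $v_\alpha=\partial\Phi/\partial x_\alpha$, the inertial dynamics (ID) on $\mathcal{X}^\circ$ are $$\ddot x_\alpha=\frac{1}{\theta''_\alpha}\Big[v_\alpha-\sum_{\beta}\frac{\Theta''}{\theta''_\beta}v_\beta\Big]-\frac{1}{2\theta''_\alpha}\Big[\theta'''_\alpha\dot x_\alpha^2-\sum_\beta\frac{\Theta''}{\theta''_\beta}\theta'''_\beta\dot x_\beta^2\Big]-\eta\dot x_\alpha.$$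 *)

theory Defs
  imports "HOL-Analysis.Analysis"
begin

text \<open>A kernel: only its restriction to (0,\<infinity>) enters the dynamics. We require
  C-infinity on (0,\<infinity>), theta' tends to -\<infinity> at 0+, theta''>0 and theta'''<0.\<close>
definition is_kernel :: "(real \<Rightarrow> real) \<Rightarrow> bool" where
  "is_kernel \<theta> \<longleftrightarrow>
     (\<forall>x>0. \<forall>k. ((deriv ^^ k) \<theta>) differentiable (at x)) \<and>
     filterlim (deriv \<theta>) at_bot (at_right 0) \<and>
     (\<forall>x>0. (deriv ^^ 2) \<theta> x > 0) \<and>
     (\<forall>x>0. (deriv ^^ 3) \<theta> x < 0)"

definition std_simplex :: "(real^('n::finite)) set" where
  "std_simplex = {x. (\<forall>i. x $ i \<ge> 0) \<and> (\<Sum>i\<in>UNIV. x $ i) = 1}"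

definition std_simplex_int :: "(real^('n::finite)) set" where
  "std_simplex_int = {x. (\<forall>i. x $ i > 0) \<and> (\<Sum>i\<in>UNIV. x $ i) = 1}"

definition pd :: "'n \<Rightarrow> (real^('n::finite) \<Rightarrow> real) \<Rightarrow> real^'n \<Rightarrow> real" where
  "pd i f x = deriv (\<lambda>t. f (x + t *\<^sub>R axis i 1)) 0"

fun pds :: "'n list \<Rightarrow> (real^('n::finite) \<Rightarrow> real) \<Rightarrow> real^'n \<Rightarrow> real" where
  "pds [] f = f"
| "pds (i # is) f = pd i (pds is f)"

definition smooth_on :: "(real^('n::finite)) set \<Rightarrow> (real^'n \<Rightarrow> real) \<Rightarrow> bool" where
  "smooth_on U f \<longleftrightarrow>
     (\<forall>is. continuous_on U (pds is f) \<and>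
       (\<forall>x\<in>U. \<forall>i. (\<lambda>t. pds is f (x + t *\<^sub>R axis i 1)) differentiable (at 0)))"

definition ID_rhs :: "(real \<Rightarrow> real) \<Rightarrow> (real^('n::finite) \<Rightarrow> real) \<Rightarrow> real \<Rightarrow> real^'n \<Rightarrow> real^'n \<Rightarrow> real^'n" where
  "ID_rhs \<theta> \<Phi> \<eta> x xd = (\<chi> a.
     (let th2 = (\<lambda>b. (deriv ^^ 2) \<theta> (x $ b));
          th3 = (\<lambda>b. (deriv ^^ 3) \<theta> (x $ b));
          v = (\<lambda>b. pd b \<Phi> x);
          Th = 1 / (\<Sum>b\<in>UNIV. 1 / th2 b)
      in (1 / th2 a) * (v a - (\<Sum>b\<in>UNIV. Th / th2 b * v b))
         - (1 / (2 * th2 a)) * (th3 a * (xd $ a)\<^sup>2 - (\<Sum>b\<in>UNIV. Th / th2 b * th3 b * (xd $ b)\<^sup>2))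
         - \<eta> * xd $ a))"

text \<open>Kinetic energy K = 1/2 ||xd||^2 in the Hessian metric at x.\<close>
definition kinetic :: "(real \<Rightarrow> real) \<Rightarrow> real^('n::finite) \<Rightarrow> real^'n \<Rightarrow> real" where
  "kinetic \<theta> x xd = (1/2) * (\<Sum>a\<in>UNIV. (deriv ^^ 2) \<theta> (x $ a) * (xd $ a)\<^sup>2)"

end

theory Submission imports Defs begin

lemma comp_deriv:
  fixes x :: "real \<Rightarrow> real^'n"
  assumes "(x has_vector_derivative v) F"
  shows "((\<lambda>s. x s $ a) has_real_derivative v $ a) F"
proof -
  have "((\<lambda>s. x s $ a) has_derivative (\<lambda>h. (h *\<^sub>R v) $ a)) F"
    using bounded_linear.has_derivative[OF bounded_linear_vec_nth assms[unfolded has_vector_derivative_def]] .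
  moreover have "(\<lambda>h. (h *\<^sub>R v) $ a) = (*) (v $ a)" by (auto simp: fun_eq_iff)
  ultimately show ?thesis by (simp add: has_field_derivative_def)
qed

lemma lip_deriv_bound:
  fixes \<Phi> :: "real^'n \<Rightarrow> real"
  assumes "open U" "x \<in> U" "L-lipschitz_on U \<Phi>"
    and "(\<lambda>t. \<Phi> (x + t *\<^sub>R axis i 1)) differentiable (at 0)"
  shows "\<bar>pd i \<Phi> x\<bar> \<le> L"
proof -
  let ?g = "\<lambda>t. \<Phi> (x + t *\<^sub>R axis i 1)"
  have D: "(?g has_real_derivative pd i \<Phi> x) (at 0)"
    unfolding pd_def using assms(4) DERIV_deriv_iff_real_differentiable by blast
  hence lim: "((\<lambda>y. (?g y - ?g 0) / (y - 0)) \<longlongrightarrow> pd i \<Phi> x) (at 0)"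
    using DERIV_def by (simp add: has_field_derivative_iff)
  obtain e where e: "e > 0" "ball x e \<subseteq> U" using assms(1,2) open_contains_ball by blast
  have key: "\<bar>(?g y - ?g 0) / (y - 0)\<bar> \<le> L" if y: "0 < \<bar>y\<bar>" "\<bar>y\<bar> < e" for y
  proof -
    have "x + y *\<^sub>R axis i 1 \<in> U" using y e by (auto simp: dist_norm)
    hence "dist (?g y) (?g 0) \<le> L * dist (x + y *\<^sub>R axis i 1) (x + 0 *\<^sub>R axis i 1)"
      using assms(2,3) lipschitz_onD by fastforce
    hence "\<bar>?g y - ?g 0\<bar> \<le> L * \<bar>y\<bar>" by (simp add: dist_norm)
    thus ?thesis using y by (simp add: abs_divide pos_divide_le_eq)
  qed
  have ev: "eventually (\<lambda>y. \<bar>(?g y - ?g 0) / (y - 0)\<bar> \<le> L) (at 0)"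
    unfolding eventually_at using e key by (auto simp: dist_norm)
  show ?thesis
    by (rule tendsto_upperbound[OF tendsto_rabs[OF lim] ev]) simp
qed


lemma within_Ici_not_bot:
  fixes t :: real assumes "t \<ge> 0" shows "at t within {0..} \<noteq> bot"
proof
  assume h: "at t within {0..} = bot"
  have "at t within {t..} \<le> at t within {0..}" using assms by (intro at_le) auto
  hence "at_right t \<le> (bot :: real filter)" using h at_within_Ici_at_right[of t] by simp
  hence "at_right t = (bot :: real filter)" by (rule bot.extremum_uniqueI)
  thus False using trivial_limit_at_right_real[of t] by simp
qed

theorem lemma3p3:
  fixes \<theta> :: "real \<Rightarrow> real" and \<Phi> :: "real^'n \<Rightarrow> real" and U :: "(real^'n) set"
    and \<eta> :: real and x xd xdd :: "real \<Rightarrow> real^'n"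
  assumes n: "CARD('n) \<ge> 2"
    and kern: "is_kernel \<theta>"
    and U: "open U" "std_simplex \<subseteq> U"
    and lip: "\<exists>L. L-lipschitz_on U \<Phi>"
    and smooth: "smooth_on U \<Phi>"
    and eta: "\<eta> > 0"
    and interior: "\<forall>t\<ge>0. x t \<in> std_simplex_int"
    and dx: "\<forall>t\<ge>0. (x has_vector_derivative xd t) (at t within {0..})"
    and ddx: "\<forall>t\<ge>0. (xd has_vector_derivative xdd t) (at t within {0..})"
    and ID: "\<forall>t\<ge>0. xdd t = ID_rhs \<theta> \<Phi> \<eta> (x t) (xd t)"
  shows "\<exists>M. \<forall>t\<ge>0. \<forall>Kd.
           ((\<lambda>s. kinetic \<theta> (x s) (xd s)) has_real_derivative Kd) (at t within {0..})
           \<longrightarrow> Kd \<le> M"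
proof -
  define th2 where "th2 = (deriv ^^ 2) \<theta>"
  define th3 where "th3 = (deriv ^^ 3) \<theta>"
  have th3_eq: "th3 = deriv th2" unfolding th2_def th3_def by (simp add: numeral_2_eq_2 numeral_3_eq_3)
  have dth2: "(th2 has_real_derivative th3 y) (at y)" if "y > 0" for y
  proof -
    have "th2 differentiable (at y)" using kern that unfolding is_kernel_def th2_def by blast
    thus ?thesis unfolding th3_eq using DERIV_deriv_iff_real_differentiable by blast
  qed
  have th2pos: "th2 y > 0" if "y > 0" for y using kern that unfolding is_kernel_def th2_def by blast
  have th3neg: "th3 y < 0" if "y > 0" for y using kern that unfolding is_kernel_def th3_def by blast
  define c where "c = th2 1"
  have cpos: "c > 0" unfolding c_def by (rule th2pos) simp
  have th2ge: "th2 y \<ge> c" if "0 < y" "y \<le> 1" for y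
  proof (cases "y = 1")
    case False
    hence "y < 1" using that by simp
    have "th2 y > th2 1"
      by (rule DERIV_neg_imp_decreasing[OF \<open>y < 1\<close>]) 
      (metis that(1) dth2 th3neg order_less_le_trans)
    thus ?thesis unfolding c_def by simp
  qed (simp add: c_def)
  obtain L where L: "L-lipschitz_on U \<Phi>" using lip by blast
  have vbound: "\<bar>pd b \<Phi> z\<bar> \<le> L" if "z \<in> std_simplex_int" for z b
  proof -
    have zU: "z \<in> U" using that U(2) unfolding std_simplex_int_def std_simplex_def
      by (auto simp: less_imp_le)
    have "(\<lambda>t. pds [] \<Phi> (z + t *\<^sub>R axis b 1)) differentiable (at 0)"
      using smooth zU unfolding smooth_on_def by blast
    thus ?thesis using lip_deriv_bound[OF U(1) zU L] by simp
  qed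
  define M where "M = real CARD('n) * (L\<^sup>2 / (4 * \<eta> * c))"
  show ?thesis
  proof (intro exI[of _ M] allI impI)
    fix t Kd :: real
    assume t: "t \<ge> 0"
    assume Kd: "((\<lambda>s. kinetic \<theta> (x s) (xd s)) has_real_derivative Kd) (at t within {0..})"
    have xin: "x t \<in> std_simplex_int" using interior t by blast
    have xpos: "x t $ a > 0" for a using xin unfolding std_simplex_int_def by blast
    have xsum: "(\<Sum>a\<in>UNIV. x t $ a) = 1" using xin unfolding std_simplex_int_def by blast
    have xle1: "x t $ a \<le> 1" for a
    proof -
      have "x t $ a \<le> (\<Sum>b\<in>UNIV. x t $ b)"
        by (rule member_le_sum) (auto intro: less_imp_le xpos)
      thus ?thesis using xsum by simp
    qed
    have cx: "((\<lambda>s. x s $ a) has_real_derivative xd t $ a) (at t within {0..})" for a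
      using comp_deriv dx t by blast
    have cxd: "((\<lambda>s. xd s $ a) has_real_derivative xdd t $ a) (at t within {0..})" for a
      using comp_deriv ddx t by blast
    have d1: "((\<lambda>s. \<Sum>a\<in>UNIV. x s $ a) has_real_derivative (\<Sum>a\<in>UNIV. xd t $ a)) (at t within {0..})"
      by (rule DERIV_sum) (rule cx)
    have d0: "((\<lambda>s. \<Sum>a\<in>UNIV. x s $ a) has_real_derivative 0) (at t within {0..})"
    proof (rule has_field_derivative_transform_within[OF DERIV_const[of 1] zero_less_one])
      show "t \<in> {0..}" using t by simp
      fix s :: real assume "s \<in> {0..}"
      hence "x s \<in> std_simplex_int" using interior by simp
      thus "1 = (\<Sum>a\<in>UNIV. x s $ a)" unfolding std_simplex_int_def by simp
    qed
    have sumxd: "(\<Sum>a\<in>UNIV. xd t $ a) = 0"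
      using vector_derivative_unique_within[OF within_Ici_not_bot[OF t]
          d1[unfolded has_real_derivative_iff_has_vector_derivative]
          d0[unfolded has_real_derivative_iff_has_vector_derivative]] .
    define D where "D a = th3 (x t $ a) * xd t $ a * (xd t $ a)\<^sup>2 + th2 (x t $ a) * (2 * xd t $ a * xdd t $ a)" for a
    have dterm: "((\<lambda>s. th2 (x s $ a) * (xd s $ a)\<^sup>2) has_real_derivative D a) (at t within {0..})" for a
    proof -
      have h1: "((\<lambda>s. th2 (x s $ a)) has_real_derivative th3 (x t $ a) * xd t $ a) (at t within {0..})"
        by (rule DERIV_chain2[OF dth2[OF xpos] cx])
      have h2: "((\<lambda>s. (xd s $ a)\<^sup>2) has_real_derivative 2 * xd t $ a * xdd t $ a) (at t within {0..})"
        using DERIV_power[OF cxd, where n=2] by (simp add: mult_ac)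
      show ?thesis using DERIV_mult[OF h1 h2] unfolding D_def by (simp add: mult_ac)
    qed
    have dK: "((\<lambda>s. kinetic \<theta> (x s) (xd s)) has_real_derivative (1/2) * (\<Sum>a\<in>UNIV. D a)) (at t within {0..})"
      unfolding kinetic_def th2_def[symmetric]
      by (rule DERIV_cmult, rule DERIV_sum, rule dterm)
    have KdE: "Kd = (1/2) * (\<Sum>a\<in>UNIV. D a)"
      using vector_derivative_unique_within[OF within_Ici_not_bot[OF t]
          Kd[unfolded has_real_derivative_iff_has_vector_derivative]
          dK[unfolded has_real_derivative_iff_has_vector_derivative]] .
    define v where "v b = pd b \<Phi> (x t)" for b
    define Th where "Th = 1 / (\<Sum>b\<in>UNIV. 1 / th2 (x t $ b))"
    define A where "A = (\<Sum>b\<in>UNIV. Th / th2 (x t $ b) * v b)"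
    define S where "S = (\<Sum>b\<in>UNIV. Th / th2 (x t $ b) * th3 (x t $ b) * (xd t $ b)\<^sup>2)"
    have xdd: "xdd t $ a = (1 / th2 (x t $ a)) * (v a - A)
         - (1 / (2 * th2 (x t $ a))) * (th3 (x t $ a) * (xd t $ a)\<^sup>2 - S) - \<eta> * xd t $ a" for a
      using ID t unfolding ID_rhs_def A_def S_def Th_def v_def th2_def th3_def
      by (simp add: Let_def)
    have Da: "(1/2) * D a = (xd t $ a * v a - \<eta> * th2 (x t $ a) * (xd t $ a)\<^sup>2) + xd t $ a * (S/2 - A)" for a
    proof -
      have hp: "th2 (x t $ a) > 0" using th2pos xpos by blast
      show ?thesis unfolding D_def xdd using hp
        by (simp add: field_simps power2_eq_square power3_eq_cube)
    qed
    have "Kd = (\<Sum>a\<in>UNIV. xd t $ a * v a - \<eta> * th2 (x t $ a) * (xd t $ a)\<^sup>2) + (\<Sum>a\<in>UNIV. xd t $ a) * (S/2 - A)"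
      unfolding KdE sum_distrib_left Da sum.distrib sum_distrib_right by simp
    hence KdE2: "Kd = (\<Sum>a\<in>UNIV. xd t $ a * v a - \<eta> * th2 (x t $ a) * (xd t $ a)\<^sup>2)"
      using sumxd by simp
    have termb: "xd t $ a * v a - \<eta> * th2 (x t $ a) * (xd t $ a)\<^sup>2 \<le> L\<^sup>2 / (4 * \<eta> * c)" for a
    proof -
      define h where "h = th2 (x t $ a)"
      define y where "y = xd t $ a"
      have hc: "h \<ge> c" unfolding h_def by (rule th2ge[OF xpos xle1])
      have hp: "h > 0" using hc cpos by simp
      have vL: "(v a)\<^sup>2 \<le> L\<^sup>2"
      proof -
        have "\<bar>v a\<bar> \<le> L" unfolding v_def by (rule vbound[OF xin])
        hence "\<bar>v a\<bar>\<^sup>2 \<le> L\<^sup>2" by (intro power_mono) auto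
        thus ?thesis by simp
      qed
      have sq: "0 \<le> (2 * \<eta> * h * y - v a)\<^sup>2" by simp
      have "y * v a - \<eta> * h * y\<^sup>2 \<le> (v a)\<^sup>2 / (4 * \<eta> * h)"
        using sq eta hp by (simp add: field_simps power2_eq_square)
      also have "\<dots> \<le> L\<^sup>2 / (4 * \<eta> * h)"
        using vL eta hp by (intro divide_right_mono) auto
      also have "\<dots> \<le> L\<^sup>2 / (4 * \<eta> * c)"
        using eta hc cpos by (intro divide_left_mono) auto
      finally show ?thesis unfolding h_def y_def .
    qed
    have "Kd \<le> (\<Sum>a\<in>(UNIV::'n set). L\<^sup>2 / (4 * \<eta> * c))"
      unfolding KdE2 by (rule sum_mono) (rule termb)
    thus "Kd \<le> M" unfolding M_def by simp
  qed
qed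

end
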